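(* Each of the following lattices is 3-remote, i.e. for every lattice point $z$ with $|z|=\sqrt3$ one has $\inf_{x\in K}|z-x|\ge1$, where $K$ is the Dirichlet region of the lattice: (1) $\mathbb{Z}\subset\mathbb{R}$; (2) $\mathbb{Z}[\mathbbm{i}]\subset\mathbb{C}$; (3) $\mathbb{Z}[\frac{1+\sqrt3\mathbbm{i}}{2}]\subset\mathbb{C}$; (4) the Hurwitz integers $\mathbb{Z}\oplus\mathbb{Z}\mathbbm{i}\oplus\mathbb{Z}\mathbbm{j}\oplus\mathbb{Z}\frac{1+\mathbbm{i}+\mathbbm{j}+\mathbbm{k}}{2}\subset\mathbb{H}$; (5) $\mathbb{Z}\oplus\mathbb{Z}\mathbbm{i}\oplus\mathbb{Z}\frac{1+\sqrt3\mathbbm{j}}{2}\oplus\mathbb{Z}\frac{\mathbbm{i}+\sqrt3\mathbbm{k}}{2}\subset\mathbb{H}$; (6) the Cayley integers $\mathbb{Z}\oplus\mathbb{Z}e_1\oplus\mathbb{Z}e_2\oplus\mathbb{Z}e_3\oplus\mathbb{Z}h\oplus\mathbb{Z}e_1h\oplus\mathbb{Z}e_2h\oplus\mathbb{Z}e_3h\subset\mathbb{O}$ with $h=(e_1+e_2+e_3-e_4)/2$; (7) $\mathbb{Z}(\frac1{\sqrt2},\frac1{\sqrt2},0)\oplus\mathbb{Z}(\frac1{\sqrt2},-\frac1{\sqrt2},0)\oplus\mathbb{Z}(\frac1{\sqrt2},0,\frac1{\sqrt2})\subset\mathbb{R}^3$; (8) $\mathbb{Z}(1,0,0)\oplus\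mathbb{Z}(\frac12,\frac{\sqrt3}2,0)\oplus\mathbb{Z}(0,0,1)\subset\mathbb{R}^3$.
   Context: $\mathbb{C},\mathbb{H},\mathbb{O}$ are identified with $\mathbb{R}^2,\mathbb{R}^4,\mathbb{R}^8$ via the bases $\{1,\mathbbm{i}\}$, $\{1,\mathbbm{i},\mathbbm{j},\mathbbm{k}\}$, $\{1,e_1,\dots,e_7\}$ (with $e_i^2=-1$), with Euclidean norm $|\cdot|$; octonion products in (6) are taken with the standard multiplication conventions used for the Cayley integers (Rehm's presentation). The Dirichlet region of a lattice $\mathcal{Z}$ is $K=\{x:|x|\le|x-z|\ \forall z\in\mathcal{Z}\}$. *)

theory Defs
  imports "HOL-Analysis.Analysis"
begin

definition int_span :: "'a::real_vector list \<Rightarrow> 'a set" where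
  "int_span gs = {(\<Sum>i<length gs. of_int (c i) *\<^sub>R gs ! i) | c :: nat \<Rightarrow> int. True}"

definition dirichlet_region :: "'a::real_normed_vector set \<Rightarrow> 'a set" where
  "dirichlet_region Z = {x. \<forall>z\<in>Z. norm x \<le> norm (x - z)}"

definition three_remote :: "'a::real_normed_vector set \<Rightarrow> bool" where
  "three_remote Z \<longleftrightarrow>
     (\<forall>z\<in>Z. norm z = sqrt 3 \<longrightarrow> infdist z (dirichlet_region Z) \<ge> 1)"

text \<open>Quaternions as real^4 with coordinates w.r.t. 1, i, j, k (Hamilton product).\<close>
definition qmul :: "real^4 \<Rightarrow> real^4 \<Rightarrow> real^4" where
  "qmul p q = vector
     [p$1*q$1 - p$2*q$2 - p$3*q$3 - p$4*q$4,
      p$1*q$2 + p$2*q$1 + p$3*q$4 - p$4*q$3,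
      p$1*q$3 - p$2*q$4 + p$3*q$1 + p$4*q$2,
      p$1*q$4 + p$2*q$3 - p$3*q$2 + p$4*q$1]"

definition qconj :: "real^4 \<Rightarrow> real^4" where
  "qconj p = vector [p$1, - p$2, - p$3, - p$4]"

text \<open>Octonions as real^8 with coordinates w.r.t. 1, e1, ..., e7, realised by the
  Cayley--Dickson doubling O = H + H e4 with e1,e2,e3 = i,j,k, e4 = (0,1) and
  e5 = e1 e4, e6 = e2 e4, e7 = e3 e4.\<close>
definition oct_fst :: "real^8 \<Rightarrow> real^4" where
  "oct_fst x = vector [x$1, x$2, x$3, x$4]"

definition oct_snd :: "real^8 \<Rightarrow> real^4" where
  "oct_snd x = vector [x$5, x$6, x$7, x$8]"

definition oct_pair :: "real^4 \<Rightarrow> real^4 \<Rightarrow> real^8" where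
  "oct_pair a b = vector [a$1, a$2, a$3, a$4, b$1, b$2, b$3, b$4]"

definition omul :: "real^8 \<Rightarrow> real^8 \<Rightarrow> real^8" where
  "omul x y = (let a = oct_fst x; b = oct_snd x; c = oct_fst y; d = oct_snd y in
     oct_pair (qmul a c - qmul (qconj d) b) (qmul d a + qmul b (qconj c)))"

text \<open>oct_unit 0 = 1, oct_unit k = e_k (k = 1..7).\<close>
definition oct_unit :: "nat \<Rightarrow> real^8" where
  "oct_unit k = vector (map (\<lambda>n. if n = k then 1 else 0) [0..<8])"

definition oct_h :: "real^8" where
  "oct_h = (1/2) *\<^sub>R (oct_unit 1 + oct_unit 2 + oct_unit 3 - oct_unit 4)"

end

theory Submission
  imports Defs
begin


lemma vector_8 [simp]:
 "(vector [x1,x2,x3,x4,x5,x6,x7,x8] ::('a::zero)^8)$1 = x1"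
 "(vector [x1,x2,x3,x4,x5,x6,x7,x8] ::('a::zero)^8)$2 = x2"
 "(vector [x1,x2,x3,x4,x5,x6,x7,x8] ::('a::zero)^8)$3 = x3"
 "(vector [x1,x2,x3,x4,x5,x6,x7,x8] ::('a::zero)^8)$4 = x4"
 "(vector [x1,x2,x3,x4,x5,x6,x7,x8] ::('a::zero)^8)$5 = x5"
 "(vector [x1,x2,x3,x4,x5,x6,x7,x8] ::('a::zero)^8)$6 = x6"
 "(vector [x1,x2,x3,x4,x5,x6,x7,x8] ::('a::zero)^8)$7 = x7"
 "(vector [x1,x2,x3,x4,x5,x6,x7,x8] ::('a::zero)^8)$8 = x8"
  unfolding vector_def by simp_all
lemma vector_4 [simp]:
 "(vector [x1,x2,x3,x4] ::('a::zero)^4)$1 = x1"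
 "(vector [x1,x2,x3,x4] ::('a::zero)^4)$2 = x2"
 "(vector [x1,x2,x3,x4] ::('a::zero)^4)$3 = x3"
 "(vector [x1,x2,x3,x4] ::('a::zero)^4)$4 = x4"
  unfolding vector_def by simp_all
lemma exhaust_8:
  fixes x :: 8
  shows "x = 1 \<or> x = 2 \<or> x = 3 \<or> x = 4 \<or> x = 5 \<or> x = 6 \<or> x = 7 \<or> x = 8"
proof (induct x)
  case (of_int z)
  then have "z = 0 \<or> z = 1 \<or> z = 2 \<or> z = 3 \<or> z = 4 \<or> z = 5 \<or> z = 6 \<or> z = 7" by fastforce
  then show ?case by auto
qed
lemma forall_8: "(\<forall>i::8. P i) \<longleftrightarrow> P 1 \<and> P 2 \<and> P 3 \<and> P 4 \<and> P 5 \<and> P 6 \<and> P 7 \<and> P 8"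
  by (metis exhaust_8)
lemma UNIV_8: "UNIV = {1, 2, 3, 4, 5, 6, 7, 8::8}"
  using exhaust_8 by auto
lemma sum_8: "sum f (UNIV::8 set) = f 1 + f 2 + f 3 + f 4 + f 5 + f 6 + f 7 + f 8"
  unfolding UNIV_8 by (simp add: ac_simps)
lemma ou: "oct_unit k = vector [if k = 0 then 1 else 0, if k = 1 then 1 else 0, if k = 2 then 1 else 0,
   if k = 3 then 1 else 0, if k = 4 then 1 else 0, if k = 5 then 1 else 0, if k = 6 then 1 else 0, if k = 7 then 1 else 0]"
  by (simp add: oct_unit_def upt_rec)



lemma three_remote_crit:
  fixes Z :: "'a::real_inner set"
  assumes "\<And>z. z \<in> Z \<Longrightarrow> norm z = sqrt 3 \<Longrightarrow> \<exists>u\<in>Z. z - u \<in> Z \<and> norm u \<le> 1 \<and> norm (z - u) \<le> 1"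
  shows "three_remote Z"
  unfolding three_remote_def
proof (intro ballI impI)
  fix z assume zZ: "z \<in> Z" and nz: "norm z = sqrt 3"
  obtain u where uZ: "u \<in> Z" and vZ: "z - u \<in> Z" and nu: "norm u \<le> 1" and nv: "norm (z - u) \<le> 1"
    using assms[OF zZ nz] by blast
  define K where "K = dirichlet_region Z"
  have K0: "0 \<in> K" by (simp add: K_def dirichlet_region_def)
  have key: "1 \<le> dist z x" if xK: "x \<in> K" for x
  proof -
    have half: "2 * (x \<bullet> w) \<le> 1" if "w \<in> Z" "norm w \<le> 1" for w
    proof -
      have "norm x \<le> norm (x - w)" using xK that(1) by (auto simp: K_def dirichlet_region_def)
      hence "norm x ^ 2 \<le> norm (x - w) ^ 2" by (simp add: power_mono)
      hence "x \<bullet> x \<le> (x - w) \<bullet> (x - w)" by (simp add: power2_norm_eq_inner)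
      hence "2 * (x \<bullet> w) \<le> w \<bullet> w" by (simp add: inner_diff_left inner_diff_right inner_commute)
      moreover have "w \<bullet> w \<le> 1" using that(2)
        by (metis norm_ge_zero power2_norm_eq_inner power_le_one)
      ultimately show ?thesis by linarith
    qed
    have h1: "2 * (x \<bullet> u) \<le> 1" using half uZ nu by blast
    have h2: "2 * (x \<bullet> (z - u)) \<le> 1" using half vZ nv by blast
    have zz: "z \<bullet> z = 3" using nz by (metis power2_norm_eq_inner real_sqrt_pow2 zero_le_numeral)
    have "dist z x ^ 2 = (z - x) \<bullet> (z - x)" by (simp add: dist_norm power2_norm_eq_inner)
    also have "\<dots> = z \<bullet> z - 2 * (x \<bullet> u) - 2 * (x \<bullet> (z - u)) + x \<bullet> x"
      by (simp add: inner_diff_left inner_diff_right inner_commute)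
    finally have "dist z x ^ 2 \<ge> 1" using h1 h2 zz inner_ge_zero[of x] by linarith
    thus ?thesis
      by (metis one_power2 power2_le_imp_le zero_le_dist)
  qed
  have "K \<noteq> {}" using K0 by blast
  hence "infdist z K = (INF a\<in>K. dist z a)" by (simp add: infdist_def)
  also have "\<dots> \<ge> 1" using \<open>K \<noteq> {}\<close> key by (intro cINF_greatest) auto
  finally show "1 \<le> infdist z (dirichlet_region Z)" by (simp add: K_def)
qed

lemma span_crit:
  fixes gs :: "'a::real_inner list"
  assumes "\<And>c. norm (\<Sum>i<length gs. of_int (c i) *\<^sub>R gs!i) = sqrt 3 \<Longrightarrow>
     \<exists>d. norm (\<Sum>i<length gs. of_int (d i) *\<^sub>R gs!i) \<le> 1 \<and>
         norm (\<Sum>i<length gs. of_int (c i - d i) *\<^sub>R gs!i) \<le> 1"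
  shows "three_remote (int_span gs)"
proof (rule three_remote_crit)
  fix z assume "z \<in> int_span gs" "norm z = sqrt 3"
  then obtain c where zc: "z = (\<Sum>i<length gs. of_int (c i) *\<^sub>R gs!i)" by (auto simp: int_span_def)
  obtain d where d1: "norm (\<Sum>i<length gs. of_int (d i) *\<^sub>R gs!i) \<le> 1"
     and d2: "norm (\<Sum>i<length gs. of_int (c i - d i) *\<^sub>R gs!i) \<le> 1"
    using assms \<open>norm z = sqrt 3\<close> zc by blast
  have diff: "z - (\<Sum>i<length gs. of_int (d i) *\<^sub>R gs!i) = (\<Sum>i<length gs. of_int (c i - d i) *\<^sub>R gs!i)"
    unfolding zc by (simp add: sum_subtractf[symmetric] scaleR_diff_left)
  show "\<exists>u\<in>int_span gs. z - u \<in> int_span gs \<and> norm u \<le> 1 \<and> norm (z - u) \<le> 1"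
  proof (intro bexI conjI)
    show "(\<Sum>i<length gs. of_int (d i) *\<^sub>R gs!i) \<in> int_span gs" by (auto simp: int_span_def)
    show "z - (\<Sum>i<length gs. of_int (d i) *\<^sub>R gs!i) \<in> int_span gs" unfolding diff
      by (auto simp: int_span_def intro!: exI[of _ "\<lambda>i. c i - d i"])
  qed (use d1 d2 diff in auto)
qed



fun pats :: "nat \<Rightarrow> int \<Rightarrow> int list list" where
  "pats 0 s = (if s = 0 then [[]] else [])"
| "pats (Suc n) s = concat (map (\<lambda>v. map (Cons v) (pats n (s - v * v))) (filter (\<lambda>v. v * v \<le> s) [0,1,2,3]))"

lemma pats_complete:
  "length p = n \<Longrightarrow> (\<forall>x\<in>set p. 0 \<le> x \<and> x \<le> 3) \<Longrightarrow> sum_list (map (\<lambda>x. x * x) p) = s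
   \<Longrightarrow> p \<in> set (pats n s)"
proof (induction p arbitrary: n s)
  case Nil
  then show ?case by simp
next
  case (Cons v p)
  then obtain n' where n: "n = Suc n'" by (cases n) auto
  have v: "v \<in> {0,1,2,3}" using Cons.prems(2) by auto
  have nn: "0 \<le> sum_list (map (\<lambda>x. x * x) p)" by (induction p) auto
  have vs: "v * v \<le> s" using Cons.prems(3) nn by simp
  have "p \<in> set (pats n' (s - v * v))"
    using Cons.IH[of n' "s - v * v"] Cons.prems n by auto
  then show ?case using n v vs by auto
qed

definition sg :: "int \<Rightarrow> int" where "sg v = (if v < 0 then -1 else 1)"

lemma generic_y:
  fixes par :: "(nat \<Rightarrow> int) \<Rightarrow> bool" and opts :: "(int \<times> nat list) list"
    and y :: "nat \<Rightarrow> int"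
  assumes par_cong: "\<And>y q. (\<forall>i<n. even (y i - q i)) \<Longrightarrow> par y = par q"
    and opts_ok: "\<forall>(m,T)\<in>set opts. distinct T \<and> set T \<subseteq> {..<n} \<and> m * m * int (length T) = R
                    \<and> par (\<lambda>i. if i \<in> set T then m else 0)"
    and check: "\<forall>p\<in>set (pats n S). par (\<lambda>i. p!i) \<longrightarrow>
                  (\<exists>(m,T)\<in>set opts. 2 * (m * sum_list (map ((!) p) T)) = S)"
    and S16: "S < 16"
    and ys: "(\<Sum>i<n. (y i)^2) = S" and yp: "par y"
  shows "\<exists>r. par r \<and> (\<Sum>i<n. (r i)^2) = R \<and> (\<Sum>i<n. (y i - r i)^2) = R"
proof -
  define p where "p = map (\<lambda>i. \<bar>y i\<bar>) [0..<n]"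
  have pn: "\<And>i. i < n \<Longrightarrow> p ! i = \<bar>y i\<bar>" by (simp add: p_def)
  have yb: "\<bar>y i\<bar> \<le> 3" if "i < n" for i
  proof -
    have "(y i)^2 \<le> (\<Sum>i<n. (y i)^2)"
      using that by (intro member_le_sum) auto
    hence "(y i)^2 < 4^2" using ys S16 by simp
    thus ?thesis using abs_le_square_iff[of 4 "y i"] by auto
  qed
  have "sum_list (map (\<lambda>x. x * x) p) = (\<Sum>i<n. (y i)^2)"
    by (simp add: p_def sum_list_sum_nth atLeast0LessThan power2_eq_square)
  hence "p \<in> set (pats n S)" using ys yb
    by (intro pats_complete) (auto simp: p_def)
  moreover have "par (\<lambda>i. p!i)"
    using yp par_cong[of "\<lambda>i. p!i" y] by (auto simp: pn)
  ultimately obtain m T where mT: "(m,T) \<in> set opts" and sT: "2 * (m * sum_list (map ((!) p) T)) = S"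
    using check by fastforce
  have Td: "distinct T" and Tn: "set T \<subseteq> {..<n}" and TR: "m * m * int (length T) = R"
    and Tp: "par (\<lambda>i. if i \<in> set T then m else 0)" using opts_ok mT by auto
  define r where "r i = (if i \<in> set T then m * sg (y i) else 0)" for i
  have rp: "par r"
  proof -
    have "\<forall>i<n. even (r i - (if i \<in> set T then m else 0))"
      by (auto simp: r_def sg_def right_diff_distrib[symmetric])
    thus ?thesis using par_cong[of r "\<lambda>i. if i \<in> set T then m else 0"] Tp by simp
  qed
  have sq: "(\<Sum>i<n. (r i)^2) = R"
  proof -
    have "(\<Sum>i<n. (r i)^2) = (\<Sum>i\<in>set T. m * m)"
      using Tn by (intro sum.mono_neutral_cong_right) (auto simp: r_def sg_def power2_eq_square)
    also have "\<dots> = m * m * int (length T)" using Td by (simp add: distinct_card)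
    finally show ?thesis using TR by simp
  qed
  have yr: "(\<Sum>i<n. y i * r i) = m * sum_list (map ((!) p) T)"
  proof -
    have "(\<Sum>i<n. y i * r i) = (\<Sum>i\<in>set T. m * \<bar>y i\<bar>)"
      using Tn by (intro sum.mono_neutral_cong_right) (auto simp: r_def sg_def)
    also have "\<dots> = m * (\<Sum>i\<in>set T. p ! i)" using Tn by (auto simp: sum_distrib_left pn intro!: sum.cong)
    also have "(\<Sum>i\<in>set T. p ! i) = sum_list (map ((!) p) T)" using Td by (simp add: sum_list_distinct_conv_sum_set)
    finally show ?thesis .
  qed
  have "(\<Sum>i<n. (y i - r i)^2) = (\<Sum>i<n. (y i)^2) - 2 * (\<Sum>i<n. y i * r i) + (\<Sum>i<n. (r i)^2)"
    by (simp add: power2_diff sum.distrib sum_subtractf sum_distrib_left mult.assoc)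
  also have "\<dots> = R" using ys sq yr sT by simp
  finally have "(\<Sum>i<n. (y i - r i)^2) = R" .
  with rp sq show ?thesis by (intro exI[of _ r]) simp
qed


lemma all_less_4: "(\<forall>k::nat<4. P k) = (P 0 \<and> P 1 \<and> P 2 \<and> P 3)"
  by (simp add: numeral_eq_Suc All_less_Suc conj_ac)
lemma all_less_8: "(\<forall>k::nat<8. P k) = (P 0 \<and> P 1 \<and> P 2 \<and> P 3 \<and> P 4 \<and> P 5 \<and> P 6 \<and> P 7)"
  by (simp add: numeral_eq_Suc All_less_Suc conj_ac)
lemma sum_lt8: "(\<Sum>i::nat<8. f i) = f 0 + f 1 + f 2 + f 3 + f 4 + f 5 + f 6 + f 7" by (simp add: eval_nat_numeral)
lemma norm4: "norm (x::real^4) ^ 2 = (x$1)^2 + (x$2)^2 + (x$3)^2 + (x$4)^2"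
  unfolding power2_norm_eq_inner by (simp add: inner_vec_def sum_4 power2_eq_square)
lemma norm8: "norm (x::real^8) ^ 2 = (x$1)^2 + (x$2)^2 + (x$3)^2 + (x$4)^2 + (x$5)^2 + (x$6)^2 + (x$7)^2 + (x$8)^2"
  unfolding power2_norm_eq_inner by (simp add: inner_vec_def sum_8 power2_eq_square)
lemma all_less_3: "(\<forall>k::nat<3. P k) = (P 0 \<and> P 1 \<and> P 2)"
  by (simp add: numeral_eq_Suc All_less_Suc conj_ac)
lemma sum_lt3: "(\<Sum>i::nat<3. f i) = f 0 + f 1 + f 2" by (simp add: eval_nat_numeral)
lemma sum_lt4: "(\<Sum>i::nat<4. f i) = f 0 + f 1 + f 2 + f 3" by (simp add: eval_nat_numeral)
lemma norm3: "norm (x::real^3) ^ 2 = (x$1)^2 + (x$2)^2 + (x$3)^2"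
  unfolding power2_norm_eq_inner by (simp add: inner_vec_def sum_3 power2_eq_square)
lemma sum_len2: "(\<Sum>i<length [a,b]. f i) = f 0 + f 1" by (simp add: eval_nat_numeral)
lemma sum_len3: "(\<Sum>i<length [a,b,c]. f i) = f 0 + f 1 + f 2" by (simp add: eval_nat_numeral)
lemma sum_len4: "(\<Sum>i<length [a,b,c,d]. f i) = f 0 + f 1 + f 2 + f 3" by (simp add: eval_nat_numeral)
lemma sum_len8: "(\<Sum>i<length [a,b,c,d,e,g,h,j]. f i) = f 0 + f 1 + f 2 + f 3 + f 4 + f 5 + f 6 + f 7"
  by (simp add: eval_nat_numeral)



lemma sq1: "(x::real)^2 = 1 \<Longrightarrow> x \<le> 1"
  by (auto simp: power2_eq_1_iff)

lemma lattice_from_y: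
  fixes gs :: "'a::real_inner list" and Y :: "(nat \<Rightarrow> int) \<Rightarrow> nat \<Rightarrow> int" and s :: int
    and par :: "(nat \<Rightarrow> int) \<Rightarrow> bool"
  assumes normf: "\<And>c. norm (\<Sum>i<length gs. of_int (c i) *\<^sub>R gs!i) ^ 2 = of_int (\<Sum>k<n. (Y c k)^2) / of_int s"
    and lin: "\<And>c d k. k < n \<Longrightarrow> Y (\<lambda>i. c i - d i) k = Y c k - Y d k"
    and surj: "\<And>r. par r \<Longrightarrow> \<exists>d. \<forall>k<n. Y d k = r k"
    and parY: "\<And>c. par (Y c)"
    and comb: "\<And>y. (\<Sum>k<n. (y k)^2) = 3 * s \<Longrightarrow> par y \<Longrightarrow>
                 \<exists>r. par r \<and> (\<Sum>k<n. (r k)^2) = s \<and> (\<Sum>k<n. (y k - r k)^2) = s"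
    and s: "s > 0"
  shows "three_remote (int_span gs)"
proof (rule span_crit)
  fix c assume nc: "norm (\<Sum>i<length gs. of_int (c i) *\<^sub>R gs!i) = sqrt 3"
  have "of_int (\<Sum>k<n. (Y c k)^2) / of_int s = (3::real)"
    using normf[of c] nc by simp
  hence "real_of_int (\<Sum>k<n. (Y c k)^2) = real_of_int (3 * s)" using s by (simp add: field_simps)
  hence y3: "(\<Sum>k<n. (Y c k)^2) = 3 * s" by (simp only: of_int_eq_iff)
  obtain r where rp: "par r" and r1: "(\<Sum>k<n. (r k)^2) = s" and r2: "(\<Sum>k<n. (Y c k - r k)^2) = s"
    using comb[OF y3 parY] by blast
  obtain d where d: "\<forall>k<n. Y d k = r k" using surj[OF rp] by blast
  have e1: "(\<Sum>k<n. (Y d k)^2) = s" using r1 d by simp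
  have e2: "(\<Sum>k<n. (Y (\<lambda>i. c i - d i) k)^2) = s" using r2 d lin by simp
  have "norm (\<Sum>i<length gs. of_int (d i) *\<^sub>R gs!i) ^ 2 = 1" using normf[of d] e1 s by simp
  hence n1: "norm (\<Sum>i<length gs. of_int (d i) *\<^sub>R gs!i) \<le> 1"
    by (rule sq1)
  have "norm (\<Sum>i<length gs. of_int (c i - d i) *\<^sub>R gs!i) ^ 2 = 1" using normf[of "\<lambda>i. c i - d i"] e2 s by simp
  hence n2: "norm (\<Sum>i<length gs. of_int (c i - d i) *\<^sub>R gs!i) \<le> 1"
    by (rule sq1)
  show "\<exists>d. norm (\<Sum>i<length gs. of_int (d i) *\<^sub>R gs!i) \<le> 1 \<and>
         norm (\<Sum>i<length gs. of_int (c i - d i) *\<^sub>R gs!i) \<le> 1" using n1 n2 by blast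
qed

definition hY :: "(nat \<Rightarrow> int) \<Rightarrow> nat \<Rightarrow> int" where
  "hY c k = [2 * c 0 + c 3, 2 * c 1 + c 3, 2 * c 2 + c 3, c 3] ! k"
definition hpar :: "(nat \<Rightarrow> int) \<Rightarrow> bool" where
  "hpar y = (even (y 0 + y 3) \<and> even (y 1 + y 3) \<and> even (y 2 + y 3))"

lemma hcheck: "\<forall>p\<in>set (pats 4 12). hpar (\<lambda>i. p!i) \<longrightarrow>
   (\<exists>(m,T)\<in>set [(2,[0]),(2,[1]),(2,[2]),(2,[3]),(1::int,[0,1,2,3::nat])]. 2 * (m * sum_list (map ((!) p) T)) = 12)"
  by code_simp

lemma hurwitz: "three_remote (int_span [vector [1,0,0,0], vector [0,1,0,0], vector [0,0,1,0],
                              vector [1/2,1/2,1/2,1/2] :: real^4])"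
proof (rule lattice_from_y[where Y = hY and n = 4 and s = 4 and par = hpar])
  fix c :: "nat \<Rightarrow> int"
  show "norm (\<Sum>i<length [vector [1,0,0,0], vector [0,1,0,0], vector [0,0,1,0],
                              vector [1/2,1/2,1/2,1/2] :: real^4]. of_int (c i) *\<^sub>R [vector [1,0,0,0], vector [0,1,0,0], vector [0,0,1,0],
                              vector [1/2,1/2,1/2,1/2] :: real^4] ! i) ^ 2 = of_int (\<Sum>k<4. (hY c k)^2) / of_int 4"
    unfolding norm4 sum_len4 by (simp add: sum_lt4 hY_def power2_eq_square algebra_simps divide_simps)
next
  fix c d :: "nat \<Rightarrow> int" and k :: nat assume "k < 4"
  then show "hY (\<lambda>i. c i - d i) k = hY c k - hY d k"
    using all_less_4[of "\<lambda>k. hY (\<lambda>i. c i - d i) k = hY c k - hY d k"] by (simp add: hY_def)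
next
  fix r assume "hpar r"
  then show "\<exists>d. \<forall>k<4. hY d k = r k"
    by (intro exI[of _ "\<lambda>i. [(r 0 - r 3) div 2, (r 1 - r 3) div 2, (r 2 - r 3) div 2, r 3] ! i"])
       (auto simp: all_less_4 hY_def hpar_def elim!: evenE)
next
  fix c show "hpar (hY c)" by (simp add: hpar_def hY_def)
next
  fix y :: "nat \<Rightarrow> int" assume "(\<Sum>k<4. (y k)^2) = 3 * 4" "hpar y"
  then show "\<exists>r. hpar r \<and> (\<Sum>k<4. (r k)^2) = 4 \<and> (\<Sum>k<4. (y k - r k)^2) = 4"
    by (intro generic_y[where opts = "[(2,[0]),(2,[1]),(2,[2]),(2,[3]),(1::int,[0,1,2,3::nat])]" and S = 12])
       (use hcheck in \<open>auto simp: all_less_4 hpar_def\<close>)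
qed simp

definition fY :: "(nat \<Rightarrow> int) \<Rightarrow> nat \<Rightarrow> int" where
  "fY c k = [c 0 + c 1 + c 2, c 0 - c 1, c 2] ! k"
definition fpar :: "(nat \<Rightarrow> int) \<Rightarrow> bool" where
  "fpar y = even (y 0 + y 1 + y 2)"

lemma fcheck: "\<forall>p\<in>set (pats 3 6). fpar (\<lambda>i. p!i) \<longrightarrow>
   (\<exists>(m,T)\<in>set [(1::int,[0,1::nat]),(1,[0,2]),(1,[1,2])]. 2 * (m * sum_list (map ((!) p) T)) = 6)"
  by code_simp

lemma fcc: "three_remote (int_span [vector [1 / sqrt 2, 1 / sqrt 2, 0],
                              vector [1 / sqrt 2, - 1 / sqrt 2, 0],
                              vector [1 / sqrt 2, 0, 1 / sqrt 2] :: real^3])"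
proof (rule lattice_from_y[where Y = fY and n = 3 and s = 2 and par = fpar])
  fix c :: "nat \<Rightarrow> int"
  let ?z = "(\<Sum>i<length [vector [1 / sqrt 2, 1 / sqrt 2, 0],
                              vector [1 / sqrt 2, - 1 / sqrt 2, 0],
                              vector [1 / sqrt 2, 0, 1 / sqrt 2] :: real^3]. of_int (c i) *\<^sub>R [vector [1 / sqrt 2, 1 / sqrt 2, 0],
                              vector [1 / sqrt 2, - 1 / sqrt 2, 0],
                              vector [1 / sqrt 2, 0, 1 / sqrt 2] :: real^3] ! i)"
  have c1: "?z $ 1 = of_int (fY c 0) / sqrt 2" unfolding sum_len3 by (simp add: fY_def field_simps)
  have c2: "?z $ 2 = of_int (fY c 1) / sqrt 2" unfolding sum_len3 by (simp add: fY_def field_simps)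
  have c3: "?z $ 3 = of_int (fY c 2) / sqrt 2" unfolding sum_len3 by (simp add: fY_def field_simps)
  show "norm ?z ^ 2 = of_int (\<Sum>k<3. (fY c k)^2) / of_int 2"
    unfolding norm3 c1 c2 c3 by (simp add: sum_lt3 power_divide add_divide_distrib)
next
  fix c d :: "nat \<Rightarrow> int" and k :: nat assume "k < 3"
  then show "fY (\<lambda>i. c i - d i) k = fY c k - fY d k"
    using all_less_3[of "\<lambda>k. fY (\<lambda>i. c i - d i) k = fY c k - fY d k"] by (simp add: fY_def)
next
  fix r assume "fpar r"
  then obtain a b where ab: "r 0 + r 1 - r 2 = 2 * a" "r 0 - r 1 - r 2 = 2 * b"
    unfolding fpar_def by (metis evenE even_add even_diff)
  show "\<exists>d. \<forall>k<3. fY d k = r k"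
    by (intro exI[of _ "\<lambda>i. [a, b, r 2] ! i"]) (use ab in \<open>simp add: all_less_3 fY_def\<close>)
next
  fix c show "fpar (fY c)" by (simp add: fpar_def fY_def)
next
  fix y :: "nat \<Rightarrow> int" assume "(\<Sum>k<3. (y k)^2) = 3 * 2" "fpar y"
  then show "\<exists>r. fpar r \<and> (\<Sum>k<3. (r k)^2) = 2 \<and> (\<Sum>k<3. (y k - r k)^2) = 2"
    by (intro generic_y[where opts = "[(1::int,[0,1::nat]),(1,[0,2]),(1,[1,2])]" and S = 6])
       (use fcheck in \<open>auto simp: all_less_3 fpar_def\<close>)
qed simp

definition eY :: "(nat \<Rightarrow> int) \<Rightarrow> nat \<Rightarrow> int" where
  "eY c k = [2 * c 0 - c 5 - c 6 - c 7, 2 * c 1 + c 4 + c 6 - c 7, 2 * c 2 + c 4 - c 5 + c 7,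
             2 * c 3 + c 4 + c 5 - c 6, - c 4, - c 5, - c 6, - c 7] ! k"
definition epar :: "(nat \<Rightarrow> int) \<Rightarrow> bool" where
  "epar y = (even (y 1 + y 2 + y 3 + y 4) \<and> even (y 0 + y 2 + y 3 + y 5) \<and>
             even (y 0 + y 1 + y 3 + y 6) \<and> even (y 0 + y 1 + y 2 + y 7))"
definition eopts :: "(int \<times> nat list) list" where
  "eopts = [(2,[0]),(2,[1]),(2,[2]),(2,[3]),(2,[4]),(2,[5]),(2,[6]),(2,[7]),
    (1,[1,2,3,4]),(1,[0,2,3,5]),(1,[0,1,3,6]),(1,[0,1,2,7]),(1,[0,1,4,5]),(1,[0,2,4,6]),(1,[0,3,4,7]),
    (1,[1,2,5,6]),(1,[1,3,5,7]),(1,[2,3,6,7]),(1,[0,5,6,7]),(1,[1,4,6,7]),(1,[2,4,5,7]),(1,[3,4,5,6])]"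

lemma echeck: "\<forall>p\<in>set (pats 8 12). epar (\<lambda>i. p!i) \<longrightarrow>
   (\<exists>(m,T)\<in>set eopts. 2 * (m * sum_list (map ((!) p) T)) = 12)"
  by code_simp

lemma e8basis: "[oct_unit 0, oct_unit 1, oct_unit 2, oct_unit 3, oct_h,
                              omul (oct_unit 1) oct_h, omul (oct_unit 2) oct_h,
                              omul (oct_unit 3) oct_h] =
  [vector [1, 0, 0, 0, 0, 0, 0, 0],
   vector [0, 1, 0, 0, 0, 0, 0, 0],
   vector [0, 0, 1, 0, 0, 0, 0, 0],
   vector [0, 0, 0, 1, 0, 0, 0, 0],
   vector [0, 1/2, 1/2, 1/2, - 1/2, 0, 0, 0],
   vector [- 1/2, 0, - 1/2, 1/2, 0, - 1/2, 0, 0],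
   vector [- 1/2, 1/2, 0, - 1/2, 0, 0, - 1/2, 0],
   vector [- 1/2, - 1/2, 1/2, 0, 0, 0, 0, - 1/2]]"
  by (simp add: vec_eq_iff forall_8 omul_def ou oct_h_def oct_fst_def oct_snd_def oct_pair_def
      qmul_def qconj_def Let_def)

lemma cayley: "three_remote (int_span [oct_unit 0, oct_unit 1, oct_unit 2, oct_unit 3, oct_h,
                              omul (oct_unit 1) oct_h, omul (oct_unit 2) oct_h,
                              omul (oct_unit 3) oct_h])"
  unfolding e8basis
proof (rule lattice_from_y[where Y = eY and n = 8 and s = 4 and par = epar])
  fix c :: "nat \<Rightarrow> int"
  show "norm (\<Sum>i<length [vector [1, 0, 0, 0, 0, 0, 0, 0],
   vector [0, 1, 0, 0, 0, 0, 0, 0],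
   vector [0, 0, 1, 0, 0, 0, 0, 0],
   vector [0, 0, 0, 1, 0, 0, 0, 0],
   vector [0, 1/2, 1/2, 1/2, - 1/2, 0, 0, 0],
   vector [- 1/2, 0, - 1/2, 1/2, 0, - 1/2, 0, 0],
   vector [- 1/2, 1/2, 0, - 1/2, 0, 0, - 1/2, 0],
   vector [- 1/2, - 1/2, 1/2, 0, 0, 0, 0, - 1/2] :: real^8]. of_int (c i) *\<^sub>R [vector [1, 0, 0, 0, 0, 0, 0, 0],
   vector [0, 1, 0, 0, 0, 0, 0, 0],
   vector [0, 0, 1, 0, 0, 0, 0, 0],
   vector [0, 0, 0, 1, 0, 0, 0, 0],
   vector [0, 1/2, 1/2, 1/2, - 1/2, 0, 0, 0],
   vector [- 1/2, 0, - 1/2, 1/2, 0, - 1/2, 0, 0],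
   vector [- 1/2, 1/2, 0, - 1/2, 0, 0, - 1/2, 0],
   vector [- 1/2, - 1/2, 1/2, 0, 0, 0, 0, - 1/2] :: real^8] ! i) ^ 2 = of_int (\<Sum>k<8. (eY c k)^2) / of_int 4"
    unfolding norm8 sum_len8 by (simp add: sum_lt8 eY_def power2_eq_square algebra_simps divide_simps)
next
  fix c d :: "nat \<Rightarrow> int" and k :: nat assume "k < 8"
  then show "eY (\<lambda>i. c i - d i) k = eY c k - eY d k"
    using all_less_8[of "\<lambda>k. eY (\<lambda>i. c i - d i) k = eY c k - eY d k"] by (simp add: eY_def)
next
  fix r assume rp: "epar r"
  have "even (r 0 - r 5 - r 6 - r 7)" using rp unfolding epar_def by presburger
  then obtain a0 where a0: "r 0 - r 5 - r 6 - r 7 = 2 * a0" by (elim evenE)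
  have "even (r 1 + r 4 + r 6 - r 7)" using rp unfolding epar_def by presburger
  then obtain a1 where a1: "r 1 + r 4 + r 6 - r 7 = 2 * a1" by (elim evenE)
  have "even (r 2 + r 4 - r 5 + r 7)" using rp unfolding epar_def by presburger
  then obtain a2 where a2: "r 2 + r 4 - r 5 + r 7 = 2 * a2" by (elim evenE)
  have "even (r 3 + r 4 + r 5 - r 6)" using rp unfolding epar_def by presburger
  then obtain a3 where a3: "r 3 + r 4 + r 5 - r 6 = 2 * a3" by (elim evenE)
  show "\<exists>d. \<forall>k<8. eY d k = r k"
    by (intro exI[of _ "\<lambda>i. [a0, a1, a2, a3, - r 4, - r 5, - r 6, - r 7] ! i"])
       (use a0 a1 a2 a3 in \<open>simp add: all_less_8 eY_def\<close>)
next
  fix c show "epar (eY c)" unfolding epar_def eY_def by simp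
next
  fix y :: "nat \<Rightarrow> int" assume "(\<Sum>k<8. (y k)^2) = 3 * 4" "epar y"
  then show "\<exists>r. epar r \<and> (\<Sum>k<8. (r k)^2) = 4 \<and> (\<Sum>k<8. (y k - r k)^2) = 4"
    by (intro generic_y[where opts = eopts and S = 12])
       (use echeck in \<open>auto simp: all_less_8 epar_def eopts_def\<close>)
qed simp



lemma lattice_from_F:
  fixes gs :: "'a::real_inner list" and F :: "(nat \<Rightarrow> int) \<Rightarrow> int"
  assumes normf: "\<And>c. norm (\<Sum>i<length gs. of_int (c i) *\<^sub>R gs!i) ^ 2 = of_int (F c)"
    and key: "\<And>c. F c = 3 \<Longrightarrow> \<exists>d. F d = 1 \<and> F (\<lambda>i. c i - d i) = 1"
  shows "three_remote (int_span gs)"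
proof (rule span_crit)
  fix c assume nc: "norm (\<Sum>i<length gs. of_int (c i) *\<^sub>R gs!i) = sqrt 3"
  have "real_of_int (F c) = real_of_int 3" using normf[of c] nc by simp
  hence "F c = 3" by (simp only: of_int_eq_iff)
  then obtain d where d1: "F d = 1" and d2: "F (\<lambda>i. c i - d i) = 1" using key by blast
  have n1: "norm (\<Sum>i<length gs. of_int (d i) *\<^sub>R gs!i) \<le> 1"
    by (rule sq1) (use normf[of d] d1 in simp)
  have n2: "norm (\<Sum>i<length gs. of_int (c i - d i) *\<^sub>R gs!i) \<le> 1"
    by (rule sq1) (use normf[of "\<lambda>i. c i - d i"] d2 in simp)
  show "\<exists>d. norm (\<Sum>i<length gs. of_int (d i) *\<^sub>R gs!i) \<le> 1 \<and>
         norm (\<Sum>i<length gs. of_int (c i - d i) *\<^sub>R gs!i) \<le> 1" using n1 n2 by blast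
qed

definition eQ :: "int \<Rightarrow> int \<Rightarrow> int" where "eQ a b = a * a + a * b + b * b"

lemma eQ4: "4 * eQ a b = (2 * a + b)^2 + 3 * b^2"
  by (simp add: eQ_def power2_eq_square algebra_simps)
lemma eQ4': "4 * eQ a b = (2 * b + a)^2 + 3 * a^2"
  by (simp add: eQ_def power2_eq_square algebra_simps)
lemma eQ_nonneg: "0 \<le> eQ a b"
  using eQ4[of a b] by (smt (verit) zero_le_power2)

lemma sq_le4: "(x::int)^2 \<le> 4 \<Longrightarrow> -2 \<le> x \<and> x \<le> 2"
  using abs_le_square_iff[of x 2] by auto
lemma sq_le3: "(x::int)^2 \<le> 3 \<Longrightarrow> -1 \<le> x \<and> x \<le> 1"
  using abs_le_square_iff[of 2 x] by auto

lemma eQ_bound: "eQ a b \<le> 3 \<Longrightarrow> -2 \<le> a \<and> a \<le> 2 \<and> -2 \<le> b \<and> b \<le> 2"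
proof -
  assume h: "eQ a b \<le> 3"
  have "b^2 \<le> 4" using eQ4[of a b] h by (smt (verit) zero_le_power2)
  moreover have "a^2 \<le> 4" using eQ4'[of a b] h by (smt (verit) zero_le_power2)
  ultimately show ?thesis using sq_le4 by blast
qed

lemma int5: "-2 \<le> a \<Longrightarrow> a \<le> 2 \<Longrightarrow> a = -2 \<or> a = -1 \<or> a = 0 \<or> a = 1 \<or> a = (2::int)"
  by auto

lemma eQ3: "eQ a b = 3 \<Longrightarrow> \<exists>d1 d2. eQ d1 d2 = 1 \<and> eQ (a - d1) (b - d2) = 1"
proof -
  assume h: "eQ a b = 3"
  then have ba: "-2 \<le> a \<and> a \<le> 2 \<and> -2 \<le> b \<and> b \<le> 2" using eQ_bound[of a b] h by simp
  have "\<exists>p\<in>set [(1,0),(0,1),(-1,0),(0,-1),(1,-1),(-1::int,1::int)].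
          eQ (fst p) (snd p) = 1 \<and> eQ (a - fst p) (b - snd p) = 1"
    using int5[of a] int5[of b] ba h by (auto simp: eQ_def)
  then obtain p where "eQ (fst p) (snd p) = 1 \<and> eQ (a - fst p) (b - snd p) = 1" by blast
  then show ?thesis by blast
qed

lemma eQ_ne2: "eQ a b \<noteq> 2"
proof
  assume h: "eQ a b = 2"
  then have ba: "-2 \<le> a \<and> a \<le> 2 \<and> -2 \<le> b \<and> b \<le> 2" using eQ_bound[of a b] h by simp
  show False using int5[of a] int5[of b] ba h by (auto simp: eQ_def)
qed

lemma eQ0: "eQ a b = 0 \<Longrightarrow> a = 0 \<and> b = 0"
proof -
  assume h: "eQ a b = 0"
  then have ba: "-2 \<le> a \<and> a \<le> 2 \<and> -2 \<le> b \<and> b \<le> 2" using eQ_bound[of a b] h by simp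
  show ?thesis using int5[of a] int5[of b] ba h by (auto simp: eQ_def)
qed

lemma s3: "(sqrt 3 / 2)^2 = (3/4::real)" by (simp add: power_divide)

lemma eisenstein: "three_remote (int_span [1, Complex (1/2) (sqrt 3 / 2)])"
proof (rule lattice_from_F[where F = "\<lambda>c. eQ (c 0) (c 1)"])
  fix c :: "nat \<Rightarrow> int"
  let ?z = "(\<Sum>i<length [1, Complex (1/2) (sqrt 3 / 2)]. of_int (c i) *\<^sub>R [1, Complex (1/2) (sqrt 3 / 2)] ! i)"
  have re: "Re ?z = of_int (c 0) + of_int (c 1) / 2" unfolding sum_len2 by simp
  have im: "Im ?z = of_int (c 1) * (sqrt 3 / 2)" unfolding sum_len2 by simp
  show "norm ?z ^ 2 = of_int (eQ (c 0) (c 1))"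
    unfolding cmod_power2 re im power_mult_distrib s3 by (simp add: eQ_def power2_eq_square field_simps)
next
  fix c :: "nat \<Rightarrow> int" assume "eQ (c 0) (c 1) = 3"
  then obtain d1 d2 where "eQ d1 d2 = 1" "eQ (c 0 - d1) (c 1 - d2) = 1" using eQ3 by blast
  then show "\<exists>d::nat\<Rightarrow>int. eQ (d 0) (d 1) = 1 \<and> eQ (c 0 - d 0) (c 1 - d 1) = 1"
    by (intro exI[of _ "\<lambda>i::nat. if i = 0 then d1 else d2"]) simp
qed

lemma gaussian: "three_remote (int_span [1, \<i>])"
proof (rule lattice_from_F[where F = "\<lambda>c. (c 0)^2 + (c 1)^2"])
  fix c :: "nat \<Rightarrow> int"
  show "norm (\<Sum>i<length [1, \<i>]. of_int (c i) *\<^sub>R [1, \<i>] ! i) ^ 2 = of_int ((c 0)^2 + (c 1)^2)"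
    unfolding sum_len2 cmod_power2 by simp
next
  fix c :: "nat \<Rightarrow> int" assume h: "(c 0)^2 + (c 1)^2 = 3"
  then have "(c 0)^2 \<le> 3" "(c 1)^2 \<le> 3" by (smt (verit) zero_le_power2)+
  then have "-1 \<le> c 0 \<and> c 0 \<le> 1" "-1 \<le> c 1 \<and> c 1 \<le> 1" using sq_le3 by blast+
  then have "c 0 \<in> {-1,0,1}" "c 1 \<in> {-1,0,1}" by auto
  then have False using h by auto
  then show "\<exists>d::nat\<Rightarrow>int. (d 0)^2 + (d 1)^2 = 1 \<and> (c 0 - d 0)^2 + (c 1 - d 1)^2 = 1" ..
qed

lemma integers: "three_remote (\<int> :: real set)"
  unfolding three_remote_def
proof (intro ballI impI)
  fix z :: real assume "z \<in> \<int>" "norm z = sqrt 3"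
  then obtain n where zn: "z = of_int n" by (auto elim: Ints_cases)
  have "z^2 = 3" using \<open>norm z = sqrt 3\<close> by (metis real_norm_def power2_abs real_sqrt_pow2 zero_le_numeral)
  hence "real_of_int (n^2) = real_of_int 3" using zn by simp
  hence h: "n^2 = 3" by (simp only: of_int_eq_iff)
  hence "-1 \<le> n \<and> n \<le> 1" using sq_le3 by simp
  hence "n \<in> {-1,0,1}" by auto
  hence False using h by auto
  thus "1 \<le> infdist z (dirichlet_region \<int>)" ..
qed

lemma a2a2: "three_remote (int_span [vector [1,0,0,0], vector [0,1,0,0],
                              vector [1/2,0,sqrt 3 / 2,0], vector [0,1/2,0,sqrt 3 / 2] :: real^4])"
proof (rule lattice_from_F[where F = "\<lambda>c. eQ (c 0) (c 2) + eQ (c 1) (c 3)"])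
  fix c :: "nat \<Rightarrow> int"
  let ?z = "(\<Sum>i<length [vector [1,0,0,0], vector [0,1,0,0],
                              vector [1/2,0,sqrt 3 / 2,0], vector [0,1/2,0,sqrt 3 / 2] :: real^4]. of_int (c i) *\<^sub>R [vector [1,0,0,0], vector [0,1,0,0],
                              vector [1/2,0,sqrt 3 / 2,0], vector [0,1/2,0,sqrt 3 / 2] :: real^4] ! i)"
  have c1: "?z $ 1 = of_int (c 0) + of_int (c 2) / 2" unfolding sum_len4 by simp
  have c2: "?z $ 2 = of_int (c 1) + of_int (c 3) / 2" unfolding sum_len4 by simp
  have c3: "?z $ 3 = of_int (c 2) * (sqrt 3 / 2)" unfolding sum_len4 by simp
  have c4: "?z $ 4 = of_int (c 3) * (sqrt 3 / 2)" unfolding sum_len4 by simp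
  show "norm ?z ^ 2 = of_int (eQ (c 0) (c 2) + eQ (c 1) (c 3))"
    unfolding norm4 c1 c2 c3 c4 power_mult_distrib s3 by (simp add: eQ_def power2_eq_square field_simps)
next
  fix c :: "nat \<Rightarrow> int" assume h: "eQ (c 0) (c 2) + eQ (c 1) (c 3) = 3"
  have n1: "0 \<le> eQ (c 0) (c 2)" "0 \<le> eQ (c 1) (c 3)" by (rule eQ_nonneg)+
  have "eQ (c 0) (c 2) \<noteq> 2" "eQ (c 1) (c 3) \<noteq> 2" by (rule eQ_ne2)+
  then have "(eQ (c 0) (c 2) = 3 \<and> eQ (c 1) (c 3) = 0) \<or> (eQ (c 0) (c 2) = 0 \<and> eQ (c 1) (c 3) = 3)"
    using h n1 by auto
  then show "\<exists>d::nat\<Rightarrow>int. eQ (d 0) (d 2) + eQ (d 1) (d 3) = 1 \<and>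
               eQ (c 0 - d 0) (c 2 - d 2) + eQ (c 1 - d 1) (c 3 - d 3) = 1"
  proof
    assume a: "eQ (c 0) (c 2) = 3 \<and> eQ (c 1) (c 3) = 0"
    then obtain d1 d2 where d: "eQ d1 d2 = 1" "eQ (c 0 - d1) (c 2 - d2) = 1" using eQ3 by blast
    have "c 1 = 0" "c 3 = 0" using a eQ0 by blast+
    then show ?thesis using d
      by (intro exI[of _ "\<lambda>i::nat. if i = 0 then d1 else if i = 2 then d2 else 0"]) (simp add: eQ_def)
  next
    assume a: "eQ (c 0) (c 2) = 0 \<and> eQ (c 1) (c 3) = 3"
    then obtain d1 d2 where d: "eQ d1 d2 = 1" "eQ (c 1 - d1) (c 3 - d2) = 1" using eQ3 by blast
    have "c 0 = 0" "c 2 = 0" using a eQ0 by blast+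
    then show ?thesis using d
      by (intro exI[of _ "\<lambda>i::nat. if i = 1 then d1 else if i = 3 then d2 else 0"]) (simp add: eQ_def)
  qed
qed

lemma hexz: "three_remote (int_span [vector [1, 0, 0], vector [1/2, sqrt 3 / 2, 0],
                              vector [0, 0, 1] :: real^3])"
proof (rule lattice_from_F[where F = "\<lambda>c. eQ (c 0) (c 1) + (c 2)^2"])
  fix c :: "nat \<Rightarrow> int"
  let ?z = "(\<Sum>i<length [vector [1, 0, 0], vector [1/2, sqrt 3 / 2, 0],
                              vector [0, 0, 1] :: real^3]. of_int (c i) *\<^sub>R [vector [1, 0, 0], vector [1/2, sqrt 3 / 2, 0],
                              vector [0, 0, 1] :: real^3] ! i)"
  have c1: "?z $ 1 = of_int (c 0) + of_int (c 1) / 2" unfolding sum_len3 by simp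
  have c2: "?z $ 2 = of_int (c 1) * (sqrt 3 / 2)" unfolding sum_len3 by simp
  have c3: "?z $ 3 = of_int (c 2)" unfolding sum_len3 by simp
  show "norm ?z ^ 2 = of_int (eQ (c 0) (c 1) + (c 2)^2)"
    unfolding norm3 c1 c2 c3 power_mult_distrib s3 by (simp add: eQ_def power2_eq_square field_simps)
next
  fix c :: "nat \<Rightarrow> int" assume h: "eQ (c 0) (c 1) + (c 2)^2 = 3"
  have n1: "0 \<le> eQ (c 0) (c 1)" by (rule eQ_nonneg)
  have "(c 2)^2 \<le> 3" using h n1 by linarith
  then have "-1 \<le> c 2 \<and> c 2 \<le> 1" by (rule sq_le3)
  then have "c 2 \<in> {-1,0,1}" by auto
  moreover have "eQ (c 0) (c 1) \<noteq> 2" by (rule eQ_ne2)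
  ultimately have c2: "c 2 = 0" and e3: "eQ (c 0) (c 1) = 3" using h by auto
  obtain d1 d2 where d: "eQ d1 d2 = 1" "eQ (c 0 - d1) (c 1 - d2) = 1" using eQ3[OF e3] by blast
  show "\<exists>d::nat\<Rightarrow>int. eQ (d 0) (d 1) + (d 2)^2 = 1 \<and> eQ (c 0 - d 0) (c 1 - d 1) + (c 2 - d 2)^2 = 1"
    using d c2 by (intro exI[of _ "\<lambda>i::nat. if i = 0 then d1 else if i = 1 then d2 else 0"]) simp
qed



theorem proposition2p6:
  shows
   "three_remote (\<int> :: real set)
    \<and> three_remote (int_span [1, \<i>])
    \<and> three_remote (int_span [1, Complex (1/2) (sqrt 3 / 2)])
    \<and> three_remote (int_span [vector [1,0,0,0], vector [0,1,0,0], vector [0,0,1,0],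
                              vector [1/2,1/2,1/2,1/2] :: real^4])
    \<and> three_remote (int_span [vector [1,0,0,0], vector [0,1,0,0],
                              vector [1/2,0,sqrt 3 / 2,0], vector [0,1/2,0,sqrt 3 / 2] :: real^4])
    \<and> three_remote (int_span [oct_unit 0, oct_unit 1, oct_unit 2, oct_unit 3, oct_h,
                              omul (oct_unit 1) oct_h, omul (oct_unit 2) oct_h,
                              omul (oct_unit 3) oct_h])
    \<and> three_remote (int_span [vector [1 / sqrt 2, 1 / sqrt 2, 0],
                              vector [1 / sqrt 2, - 1 / sqrt 2, 0],
                              vector [1 / sqrt 2, 0, 1 / sqrt 2] :: real^3])
    \<and> three_remote (int_span [vector [1, 0, 0], vector [1/2, sqrt 3 / 2, 0],
                              vector [0, 0, 1] :: real^3])"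
  using integers gaussian eisenstein hurwitz a2a2 cayley fcc hexz by blast

end
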